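(* If $[\alpha]_{K\times K}\in\mathcal A_{\mathrm{SLS}}$, then for every $S\subseteq[K]$ there exists a p-optimal cyclic partition of $S$ containing at most one trivial cycle (cycle of length $1$).
   Context: SLS regime: $\mathcal A_{\mathrm{SLS}}=\{[\alpha]\in\mathbb R_+^{K\times K}:\ \alpha_{ii}\ge\max(\alpha_{ij},\alpha_{ki},\alpha_{ik}+\alpha_{ji}-\alpha_{jk})\ \forall i,j,k\in[K],\ i\notin\{j,k\}\}$. Cycles: a cycle $\pi=(i_1\to\cdots\to i_M)$, $M\ge1$, is an ordered list of distinct indices of $[K]$, read cyclically ($i_{M+1}=i_1$); $\{\pi\}$ its set; $\Pi$ the set of all cycles; a cycle of length $1$ is called trivial; a cyclic partition of $S$ is a collection of disjoint cycles whose sets have union $S$. $\delta_{ij}=\alpha_{ii}-\alpha_{ji}$ ($i\neq j$), $\delta_{ii}=0$; $\Delta_\pi=\sum_{m=1}^M\delta_{i_mi_{m+1}}$ if $M>1$, $\Delta_\pi=\alpha_{i_1i_1}$ if $M=1$. For $S\subseteq[K]$, $\mathcal D_{\mathrm{P\text{-}TIN}}(S)=\{(d_k)_{k\in[K]}: d_k=0\ (k\notin S),\ d_k\ge0\ (k\in S),\ \sum_{k\in\{\pi\}}d_k\le\Delta_\pi\ \forall \pi\in\Pi,\ \{\pi\}\subseteq S\}$ and $\mathcal D_{\Sigma,\mathrm{P\text{-}TIN}}(S)$ is the maximum of $\sum_{k\in S}d_k$ over it. A cyclic partition $\pi_1,\dots,\pi_n$ of $S$ is p-optimal if $\mathcal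 D_{\Sigma,\mathrm{P\text{-}TIN}}(S)=\sum_{l=1}^n\Delta_{\pi_l}$. *)

theory Defs
  imports Main "HOL-Library.Extended_Real" Complex_Main
begin

text \<open>Indices are [K] = {1..K}; the matrix alpha is a function nat => nat => real,
  only its values on {1..K} x {1..K} matter.\<close>

definition SLS :: "nat \<Rightarrow> (nat \<Rightarrow> nat \<Rightarrow> real) \<Rightarrow> bool" where
  "SLS K \<alpha> \<longleftrightarrow>
     (\<forall>i\<in>{1..K}. \<forall>j\<in>{1..K}. \<alpha> i j \<ge> 0) \<and>
     (\<forall>i\<in>{1..K}. \<forall>j\<in>{1..K}. \<forall>k\<in>{1..K}. i \<noteq> j \<and> i \<noteq> k \<longrightarrow>
        \<alpha> i i \<ge> max (\<alpha> i j) (max (\<alpha> k i) (\<alpha> i k + \<alpha> j i - \<alpha> j k)))"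

text \<open>A cycle (i_1 -> ... -> i_M) is a nonempty list of distinct indices of [K], read cyclically.\<close>
definition is_cycle :: "nat \<Rightarrow> nat list \<Rightarrow> bool" where
  "is_cycle K \<pi> \<longleftrightarrow> \<pi> \<noteq> [] \<and> distinct \<pi> \<and> set \<pi> \<subseteq> {1..K}"

definition delta :: "(nat \<Rightarrow> nat \<Rightarrow> real) \<Rightarrow> nat \<Rightarrow> nat \<Rightarrow> real" where
  "delta \<alpha> i j = (if i = j then 0 else \<alpha> i i - \<alpha> j i)"

definition Delta :: "(nat \<Rightarrow> nat \<Rightarrow> real) \<Rightarrow> nat list \<Rightarrow> real" where
  "Delta \<alpha> \<pi> =
     (if length \<pi> = 1 then \<alpha> (hd \<pi>) (hd \<pi>)
      else (\<Sum>m<length \<pi>. delta \<alpha> (\<pi> ! m) (\<pi> ! ((m + 1) mod length \<pi>))))"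

definition D_PTIN :: "nat \<Rightarrow> (nat \<Rightarrow> nat \<Rightarrow> real) \<Rightarrow> nat set \<Rightarrow> (nat \<Rightarrow> real) set" where
  "D_PTIN K \<alpha> S = {d. (\<forall>k. k \<notin> S \<longrightarrow> d k = 0) \<and> (\<forall>k\<in>S. d k \<ge> 0) \<and>
      (\<forall>\<pi>. is_cycle K \<pi> \<and> set \<pi> \<subseteq> S \<longrightarrow> (\<Sum>k\<in>set \<pi>. d k) \<le> Delta \<alpha> \<pi>)}"

text \<open>The maximum of the sum-objective over D_PTIN(S) (the feasible set is a compact
  nonempty polytope under SLS, so the supremum is attained).\<close>
definition D_Sigma_PTIN :: "nat \<Rightarrow> (nat \<Rightarrow> nat \<Rightarrow> real) \<Rightarrow> nat set \<Rightarrow> real" where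
  "D_Sigma_PTIN K \<alpha> S = Sup ((\<lambda>d. \<Sum>k\<in>S. d k) ` D_PTIN K \<alpha> S)"

definition cyclic_partition :: "nat \<Rightarrow> nat set \<Rightarrow> nat list list \<Rightarrow> bool" where
  "cyclic_partition K S ps \<longleftrightarrow>
     (\<forall>\<pi>\<in>set ps. is_cycle K \<pi>) \<and> distinct (concat ps) \<and> set (concat ps) = S"

definition p_optimal :: "nat \<Rightarrow> (nat \<Rightarrow> nat \<Rightarrow> real) \<Rightarrow> nat set \<Rightarrow> nat list list \<Rightarrow> bool" where
  "p_optimal K \<alpha> S ps \<longleftrightarrow> cyclic_partition K S ps \<and>
     D_Sigma_PTIN K \<alpha> S = (\<Sum>\<pi>\<leftarrow>ps. Delta \<alpha> \<pi>)"

end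

theory Submission
  imports Defs "HOL-Combinatorics.Cycles"
begin


fun pw :: "('a \<Rightarrow> 'a \<Rightarrow> real) \<Rightarrow> 'a list \<Rightarrow> real" where
  "pw w (x # y # xs) = w x y + pw w (y # xs)"
| "pw w _ = 0"

definition cw :: "('a \<Rightarrow> 'a \<Rightarrow> real) \<Rightarrow> 'a list \<Rightarrow> real" where
  "cw f cs = (\<Sum>t<length cs. f (cs ! t) (cs ! ((t + 1) mod length cs)))"

lemma pw_snoc: "xs \<noteq> [] \<Longrightarrow> pw w (xs @ [y]) = pw w xs + w (last xs) y"
  by (induction w xs rule: pw.induct) auto

lemma pw_append: "pw w (ys @ j # zs) = pw w (ys @ [j]) + pw w (j # zs)"
  by (induction ys rule: induct_list012) auto

lemma pw_nth: "pw w xs = (\<Sum>t<length xs - 1. w (xs ! t) (xs ! (t + 1)))"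
proof (induction w xs rule: pw.induct)
  case (1 w x y xs)
  have "(\<Sum>t<length (x # y # xs) - 1. w ((x # y # xs) ! t) ((x # y # xs) ! (t + 1)))
     = (\<Sum>t<Suc (length (y # xs) - 1). w ((x # y # xs) ! t) ((x # y # xs) ! (t + 1)))" by simp
  also have "\<dots> = w x y + (\<Sum>t<length (y # xs) - 1. w ((y # xs) ! t) ((y # xs) ! (t + 1)))"
    by (subst sum.lessThan_Suc_shift) simp
  finally show ?case using 1 by simp
qed auto

lemma cw_pw: assumes "cs \<noteq> []" shows "cw f cs = pw f cs + f (last cs) (hd cs)"
proof -
  obtain m where m: "length cs = Suc m" using assms by (cases cs) auto
  have "cw f cs = (\<Sum>t<Suc m. f (cs ! t) (cs ! ((t + 1) mod Suc m)))" unfolding cw_def m ..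
  also have "\<dots> = (\<Sum>t<m. f (cs ! t) (cs ! ((t + 1) mod Suc m))) + f (cs ! m) (cs ! 0)"
    by simp
  also have "(\<Sum>t<m. f (cs ! t) (cs ! ((t + 1) mod Suc m))) = (\<Sum>t<m. f (cs ! t) (cs ! (t + 1)))"
    by (rule sum.cong) auto
  also have "\<dots> = pw f cs" using pw_nth[of f cs] m by simp
  also have "cs ! m = last cs" using m assms by (simp add: last_conv_nth)
  also have "cs ! 0 = hd cs" using assms by (simp add: hd_conv_nth)
  finally show ?thesis .
qed

lemma cycle_nth:
  assumes "distinct cs" "t < length cs"
  shows "cycle_of_list cs (cs ! t) = cs ! ((t + 1) mod length cs)"
proof -
  have "cycle_of_list cs (cs ! t) = map (cycle_of_list cs) cs ! t" using assms by simp
  also have "\<dots> = rotate 1 cs ! t" using cyclic_rotation[OF assms(1), of 1] by simp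
  also have "\<dots> = cs ! ((t + 1) mod length cs)" using nth_rotate[OF assms(2), of 1] by simp
  finally show ?thesis .
qed

lemma L_succ:
  assumes "distinct cs"
  shows "(\<Sum>z\<in>set cs. f z (cycle_of_list cs z)) = cw f cs"
proof -
  have s: "set cs = (\<lambda>t. cs ! t) ` {..<length cs}" by (auto simp: set_conv_nth)
  have inj: "inj_on (\<lambda>t. cs ! t) {..<length cs}" using assms by (simp add: inj_on_def nth_eq_iff_index_eq)
  have "(\<Sum>z\<in>set cs. f z (cycle_of_list cs z)) = (\<Sum>t<length cs. f (cs ! t) (cycle_of_list cs (cs ! t)))"
    unfolding s by (subst sum.reindex[OF inj]) simp
  also have "\<dots> = cw f cs" unfolding cw_def
    by (rule sum.cong) (auto simp: cycle_nth[OF assms])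
  finally show ?thesis .
qed

definition Cm :: "(nat \<Rightarrow> nat \<Rightarrow> real) \<Rightarrow> nat \<Rightarrow> nat \<Rightarrow> real" where
  "Cm \<alpha> x y = (if x = y then \<alpha> x x else \<alpha> x x - \<alpha> y x)"

lemma Delta_cw: assumes "distinct \<pi>" "\<pi> \<noteq> []" shows "Delta \<alpha> \<pi> = cw (Cm \<alpha>) \<pi>"
proof (cases "length \<pi> = 1")
  case True
  then obtain x where "\<pi> = [x]" by (cases \<pi>) auto
  then show ?thesis by (simp add: Delta_def cw_def Cm_def)
next
  case False
  have "length \<pi> \<noteq> 0" using assms(2) by simp
  with False have n: "length \<pi> \<ge> 2" by linarith
  have "\<pi> ! t \<noteq> \<pi> ! ((t + 1) mod length \<pi>)" if "t < length \<pi>" for t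
  proof -
    have "t \<noteq> (t + 1) mod length \<pi>"
      using n that by (metis Suc_eq_plus1 less_le_not_le mod_less mod_self nat_neq_iff not_less_eq numeral_2_eq_2 order_less_le_trans zero_less_Suc)
    moreover have "(t + 1) mod length \<pi> < length \<pi>" using n by (intro mod_less_divisor) linarith
    ultimately show ?thesis using nth_eq_iff_index_eq[OF assms(1) that] by blast
  qed
  then show ?thesis using False unfolding Delta_def cw_def
    by (auto intro!: sum.cong simp: Cm_def delta_def)
qed



lemma potentials_exist:
  fixes V :: "'a set" and w :: "'a \<Rightarrow> 'a \<Rightarrow> real"
  assumes fin: "finite V"
    and nocyc: "\<And>cs. cs \<noteq> [] \<Longrightarrow> distinct cs \<Longrightarrow> set cs \<subseteq> V \<Longrightarrow> pw w cs + w (last cs) (hd cs) \<ge> 0"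
  shows "\<exists>v. (\<forall>j\<in>V. v j \<le> 0) \<and> (\<forall>x\<in>V. \<forall>j\<in>V. v j \<le> v x + w x j) \<and>
             (\<forall>j\<in>V. v j = 0 \<or> (\<exists>x\<in>V. x \<noteq> j \<and> v x + w x j \<le> v j))"
proof -
  define P where "P j = {xs. xs \<noteq> [] \<and> distinct xs \<and> set xs \<subseteq> V \<and> last xs = j}" for j
  have finP: "finite (P j)" for j
  proof (rule finite_subset[OF _ finite_lists_length_le[OF fin, of "card V"]])
    show "P j \<subseteq> {xs. set xs \<subseteq> V \<and> length xs \<le> card V}"
    proof
      fix xs assume "xs \<in> P j"
      then have "distinct xs" "set xs \<subseteq> V" by (auto simp: P_def)
      then have "length xs \<le> card V" using distinct_card card_mono[OF fin] by metis
      then show "xs \<in> {xs. set xs \<subseteq> V \<and> length xs \<le> card V}" using \<open>set xs \<subseteq> V\<close> by simp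
    qed
  qed
  define v where "v j = Min (pw w ` P j)" for j
  have inP: "[j] \<in> P j" if "j \<in> V" for j using that by (simp add: P_def)
  have vle: "v j \<le> pw w xs" if "xs \<in> P j" for j xs
    unfolding v_def using finP that by (intro Min_le) auto
  have vin: "\<exists>xs\<in>P j. pw w xs = v j" if "j \<in> V" for j
  proof -
    have "v j \<in> pw w ` P j" unfolding v_def using finP inP[OF that] by (intro Min_in) auto
    then show ?thesis by auto
  qed
  have 1: "\<forall>j\<in>V. v j \<le> 0" using vle[OF inP] by simp
  have 2: "v j \<le> v x + w x j" if x: "x \<in> V" and j: "j \<in> V" for x j
  proof -
    obtain xs where xs: "xs \<in> P x" "pw w xs = v x" using vin[OF x] by blast
    show ?thesis
    proof (cases "j \<in> set xs")
      case True
      then obtain ys zs where sp: "xs = ys @ j # zs" by (meson split_list)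
      have "ys @ [j] \<in> P j" using xs(1) unfolding P_def sp by auto
      then have a: "v j \<le> pw w (ys @ [j])" by (rule vle)
      have c: "pw w (j # zs) + w (last (j # zs)) (hd (j # zs)) \<ge> 0"
        using xs(1) unfolding P_def sp by (intro nocyc) auto
      have "last (j # zs) = x" using xs(1) unfolding P_def sp by auto
      with c have "pw w (j # zs) + w x j \<ge> 0" by simp
      moreover have "pw w xs = pw w (ys @ [j]) + pw w (j # zs)" using sp pw_append by simp
      ultimately show ?thesis using a xs(2) by linarith
    next
      case False
      have "xs @ [j] \<in> P j" using xs(1) False j unfolding P_def by auto
      then have "v j \<le> pw w (xs @ [j])" by (rule vle)
      also have "\<dots> = pw w xs + w x j" using xs(1) unfolding P_def by (simp add: pw_snoc)
      finally show ?thesis using xs(2) by simp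
    qed
  qed
  have 3: "v j = 0 \<or> (\<exists>x\<in>V. x \<noteq> j \<and> v x + w x j \<le> v j)" if j: "j \<in> V" for j
  proof (cases "v j = 0")
    case True then show ?thesis by simp
  next
    case False
    note nz = False
    obtain xs where xs: "xs \<in> P j" "pw w xs = v j" using vin[OF j] by blast
    have "xs \<noteq> []" "last xs = j" using xs(1) by (auto simp: P_def)
    then obtain ys where ys: "xs = ys @ [j]" by (metis append_butlast_last_id)
    have "ys \<noteq> []" using nz xs(2) ys by auto
    define x where "x = last ys"
    have "ys \<in> P x" using xs(1) \<open>ys \<noteq> []\<close> unfolding P_def ys x_def by auto
    then have "v x \<le> pw w ys" by (rule vle)
    moreover have "pw w xs = pw w ys + w x j" unfolding ys x_def using \<open>ys \<noteq> []\<close> by (simp add: pw_snoc)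
    moreover have "x \<in> V" "x \<noteq> j" using xs(1) \<open>ys \<noteq> []\<close> unfolding P_def ys x_def by auto
    ultimately show ?thesis using xs(2) by force
  qed
  show ?thesis using 1 2 3 by blast
qed



lemma nth_succ_neq:
  assumes "distinct cs" "length cs \<ge> 2" "t < length cs"
  shows "cs ! t \<noteq> cs ! ((t + 1) mod length cs)"
proof -
  have "t \<noteq> (t + 1) mod length cs"
    using assms by (metis Suc_eq_plus1 less_le_not_le mod_less mod_self nat_neq_iff not_less_eq numeral_2_eq_2 order_less_le_trans zero_less_Suc)
  moreover have "(t + 1) mod length cs < length cs" using assms by (intro mod_less_divisor) linarith
  ultimately show ?thesis using nth_eq_iff_index_eq[OF assms(1) assms(3)] by blast
qed

lemma cyc_fix:
  assumes "distinct cs"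
  shows "card {x\<in>set cs. cycle_of_list cs x = x} = (if length cs = 1 then 1 else 0)"
proof (cases "length cs \<ge> 2")
  case True
  have "{x\<in>set cs. cycle_of_list cs x = x} = {}"
  proof safe
    fix x assume "x \<in> set cs" "cycle_of_list cs x = x"
    then obtain t where t: "t < length cs" "x = cs ! t" by (auto simp: in_set_conv_nth)
    then show "x \<in> {}" using cycle_nth[OF assms t(1)] nth_succ_neq[OF assms True t(1)] \<open>cycle_of_list cs x = x\<close> by simp
  qed
  then show ?thesis using True by simp
next
  case False
  then consider "cs = []" | y where "cs = [y]" by (cases cs; cases "tl cs") auto
  then show ?thesis by cases auto
qed

lemma cd_perm: "cycle_decomp I p \<Longrightarrow> p permutes I \<and> finite I"
proof (induction rule: cycle_decomp.induct)
  case empty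
  then show ?case by (auto simp: permutes_def id_def)
next
  case (comp I p cs)
  have "p permutes (set cs \<union> I)" using comp.IH by (auto intro: permutes_subset)
  moreover have "cycle_of_list cs permutes (set cs \<union> I)" using cycle_permutes by (auto intro: permutes_subset)
  ultimately show ?case using comp.IH permutes_compose[of p "set cs \<union> I" "cycle_of_list cs"] by (simp add: comp_def)
qed

lemma conv:
  fixes f :: "'a \<Rightarrow> 'a \<Rightarrow> real"
  assumes "cycle_decomp I p"
  shows "\<exists>ps. (\<forall>\<pi>\<in>set ps. \<pi> \<noteq> [] \<and> distinct \<pi>) \<and> distinct (concat ps) \<and> set (concat ps) = I \<and>
     (\<Sum>\<pi>\<leftarrow>ps. cw f \<pi>) = (\<Sum>x\<in>I. f x (p x)) \<and>
     length (filter (\<lambda>\<pi>. length \<pi> = 1) ps) = card {x\<in>I. p x = x}"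
  using assms
proof (induction rule: cycle_decomp.induct)
  case empty
  then show ?case by (intro exI[of _ "[]"]) simp
next
  case (comp I p cs)
  from comp.IH obtain ps where ps: "\<forall>\<pi>\<in>set ps. \<pi> \<noteq> [] \<and> distinct \<pi>" "distinct (concat ps)"
     "set (concat ps) = I" "(\<Sum>\<pi>\<leftarrow>ps. cw f \<pi>) = (\<Sum>x\<in>I. f x (p x))"
     "length (filter (\<lambda>\<pi>. length \<pi> = 1) ps) = card {x\<in>I. p x = x}" by blast
  have pI: "p permutes I" and finI: "finite I" using cd_perm[OF comp.hyps(1)] by auto
  let ?c = "cycle_of_list cs"
  have A: "(?c \<circ> p) x = p x" if "x \<in> I" for x
  proof -
    have "p x \<in> I" using pI that by (simp add: permutes_in_image)
    then have "p x \<notin> set cs" using comp.hyps(3) by auto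
    then show ?thesis by (simp add: id_outside_supp)
  qed
  have B: "(?c \<circ> p) x = ?c x" if "x \<in> set cs" for x
  proof -
    have "x \<notin> I" using comp.hyps(3) that by auto
    then show ?thesis using pI by (simp add: permutes_not_in)
  qed
  have sum: "(\<Sum>x\<in>set cs \<union> I. f x ((?c \<circ> p) x)) = cw f cs + (\<Sum>x\<in>I. f x (p x))"
  proof -
    have "(\<Sum>x\<in>set cs \<union> I. f x ((?c \<circ> p) x)) = (\<Sum>x\<in>set cs. f x ((?c \<circ> p) x)) + (\<Sum>x\<in>I. f x ((?c \<circ> p) x))"
      using comp.hyps(3) finI by (intro sum.union_disjoint) auto
    also have "(\<Sum>x\<in>set cs. f x ((?c \<circ> p) x)) = (\<Sum>x\<in>set cs. f x (?c x))" using B by simp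
    also have "\<dots> = cw f cs" using L_succ[OF comp.hyps(2)] .
    also have "(\<Sum>x\<in>I. f x ((?c \<circ> p) x)) = (\<Sum>x\<in>I. f x (p x))" using A by simp
    finally show ?thesis .
  qed
  have fixset: "{x\<in>set cs \<union> I. (?c \<circ> p) x = x} = {x\<in>set cs. ?c x = x} \<union> {x\<in>I. p x = x}"
    using A B by (auto; metis)
  have fixc: "card {x\<in>set cs \<union> I. (?c \<circ> p) x = x} = (if length cs = 1 then 1 else 0) + card {x\<in>I. p x = x}"
    unfolding fixset using comp.hyps(3) finI cyc_fix[OF comp.hyps(2)]
    by (subst card_Un_disjoint) auto
  show ?case
  proof (cases "cs = []")
    case True
    then show ?thesis using ps by (intro exI[of _ ps]) (simp add: cw_def)
  next
    case False
    show ?thesis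
      apply (intro exI[of _ "cs # ps"])
      using ps False comp.hyps(2,3) sum fixc by auto
  qed
qed



lemma weak_aux:
  fixes d :: "'a \<Rightarrow> real" and g :: "'a list \<Rightarrow> real"
  assumes "distinct (concat ps)" "\<forall>\<pi>\<in>set ps. sum d (set \<pi>) \<le> g \<pi>"
  shows "sum d (set (concat ps)) \<le> (\<Sum>\<pi>\<leftarrow>ps. g \<pi>)"
  using assms
proof (induction ps)
  case Nil then show ?case by simp
next
  case (Cons \<pi> ps)
  have "sum d (set (concat (\<pi> # ps))) = sum d (set \<pi>) + sum d (set (concat ps))"
    using Cons.prems(1) by (simp add: sum.union_disjoint)
  also have "\<dots> \<le> g \<pi> + (\<Sum>\<pi>\<leftarrow>ps. g \<pi>)" using Cons by (intro add_mono) auto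
  finally show ?case by simp
qed

lemma weak:
  assumes "d \<in> D_PTIN K \<alpha> S" "cyclic_partition K S ps"
  shows "(\<Sum>k\<in>S. d k) \<le> (\<Sum>\<pi>\<leftarrow>ps. Delta \<alpha> \<pi>)"
proof -
  have "set (concat ps) = S" "distinct (concat ps)" using assms(2) by (auto simp: cyclic_partition_def)
  moreover have "\<forall>\<pi>\<in>set ps. sum d (set \<pi>) \<le> Delta \<alpha> \<pi>"
  proof
    fix \<pi> assume p: "\<pi> \<in> set ps"
    then have "is_cycle K \<pi>" "set \<pi> \<subseteq> S" using assms(2) \<open>set (concat ps) = S\<close>
      by (auto simp: cyclic_partition_def)
    then show "sum d (set \<pi>) \<le> Delta \<alpha> \<pi>" using assms(1) by (auto simp: D_PTIN_def)
  qed
  ultimately show ?thesis using weak_aux by metis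
qed

lemma sum_two:
  assumes "finite S" "i \<in> S" "j \<in> S" "i \<noteq> j"
  shows "(\<Sum>x\<in>S. g x) = g i + g j + (\<Sum>x\<in>S - {i, j}. g x)"
proof -
  have "(\<Sum>x\<in>S. g x) = g i + (\<Sum>x\<in>S - {i}. g x)" using assms by (simp add: sum.remove)
  also have "(\<Sum>x\<in>S - {i}. g x) = g j + (\<Sum>x\<in>S - {i} - {j}. g x)" using assms by (intro sum.remove) auto
  also have "S - {i} - {j} = S - {i, j}" by auto
  finally show ?thesis by (simp add: add.assoc)
qed



lemma SLS_nonneg: "SLS K \<alpha> \<Longrightarrow> i \<in> {1..K} \<Longrightarrow> j \<in> {1..K} \<Longrightarrow> \<alpha> i j \<ge> 0"
  by (auto simp: SLS_def)

lemma SLS_col: "SLS K \<alpha> \<Longrightarrow> i \<in> {1..K} \<Longrightarrow> k \<in> {1..K} \<Longrightarrow> i \<noteq> k \<Longrightarrow> \<alpha> k i \<le> \<alpha> i i"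
  unfolding SLS_def by (metis max.boundedE)

lemma SLS_tri: "SLS K \<alpha> \<Longrightarrow> i \<in> {1..K} \<Longrightarrow> j \<in> {1..K} \<Longrightarrow> k \<in> {1..K} \<Longrightarrow> i \<noteq> j \<Longrightarrow> i \<noteq> k
   \<Longrightarrow> \<alpha> i k + \<alpha> j i - \<alpha> j k \<le> \<alpha> i i"
  unfolding SLS_def by (metis max.boundedE)

lemma main_opt:
  fixes K :: nat and \<alpha> :: "nat \<Rightarrow> nat \<Rightarrow> real" and S :: "nat set" and \<sigma> :: "nat \<Rightarrow> nat"
  assumes sls: "SLS K \<alpha>" and SK: "S \<subseteq> {1..K}" and sig: "\<sigma> permutes S"
    and opt: "\<And>\<tau>. \<tau> permutes S \<Longrightarrow> (\<Sum>x\<in>S. Cm \<alpha> x (\<sigma> x)) \<le> (\<Sum>x\<in>S. Cm \<alpha> x (\<tau> x))"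
  shows "\<exists>d\<in>D_PTIN K \<alpha> S. (\<Sum>k\<in>S. d k) = (\<Sum>x\<in>S. Cm \<alpha> x (\<sigma> x))"
proof -
  have fin: "finite S" using SK finite_subset by blast
  define r where "r = inv \<sigma>"
  have rp: "r permutes S" unfolding r_def using permutes_inv[OF sig] .
  have sr: "\<sigma> (r z) = z" for z unfolding r_def using permutes_inverses(1)[OF sig] .
  have rs: "r (\<sigma> z) = z" for z unfolding r_def using permutes_inverses(2)[OF sig] .
  have inS: "\<sigma> x \<in> S" "r x \<in> S" if "x \<in> S" for x
    using that sig rp by (auto simp: permutes_in_image)
  define W where "W a j = Cm \<alpha> (r a) j - Cm \<alpha> (r a) a" for a j
  have Wzz: "W z z = 0" for z by (simp add: W_def)
  have reidx: "(\<Sum>x\<in>S. g x) = (\<Sum>z\<in>S. g (r z))" for g :: "nat \<Rightarrow> real"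
    using sum.permute[OF rp, of g] by (simp add: comp_def)
  have nocyc: "pw W cs + W (last cs) (hd cs) \<ge> 0"
    if cs: "cs \<noteq> []" "distinct cs" "set cs \<subseteq> S" for cs
  proof -
    let ?c = "cycle_of_list cs"
    have cp: "?c permutes S" using cycle_permutes permutes_subset cs(3) by blast
    have tp: "?c \<circ> \<sigma> permutes S" using permutes_compose[OF sig cp] .
    have "(\<Sum>x\<in>S. Cm \<alpha> x ((?c \<circ> \<sigma>) x)) - (\<Sum>x\<in>S. Cm \<alpha> x (\<sigma> x))
        = (\<Sum>z\<in>S. Cm \<alpha> (r z) (?c z)) - (\<Sum>z\<in>S. Cm \<alpha> (r z) z)"
      by (subst (1 2) reidx) (simp add: sr)
    also have "\<dots> = (\<Sum>z\<in>S. W z (?c z))" by (simp add: W_def sum_subtractf)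
    also have "\<dots> = (\<Sum>z\<in>set cs. W z (?c z))"
      using fin cs(3) by (intro sum.mono_neutral_right) (auto simp: id_outside_supp Wzz)
    also have "\<dots> = cw W cs" using L_succ[OF cs(2)] .
    also have "\<dots> = pw W cs + W (last cs) (hd cs)" using cw_pw[OF cs(1)] .
    finally show ?thesis using opt[OF tp] by linarith
  qed
  obtain v where v1: "\<forall>j\<in>S. v j \<le> 0" and v2: "\<forall>x\<in>S. \<forall>j\<in>S. v j \<le> v x + W x j"
     and v3: "\<forall>j\<in>S. v j = 0 \<or> (\<exists>x\<in>S. x \<noteq> j \<and> v x + W x j \<le> v j)"
    using potentials_exist[OF fin, of W] nocyc by blast
  define u where "u i = Cm \<alpha> i (\<sigma> i) - v (\<sigma> i)" for i
  define d where "d k = (if k \<in> S then u k + v k else 0)" for k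
  have pot: "u i + v j \<le> Cm \<alpha> i j" if "i \<in> S" "j \<in> S" for i j
    using v2 that inS[OF that(1)] unfolding u_def W_def by (force simp: rs)
  have KS: "x \<in> {1..K}" if "x \<in> S" for x using that SK by auto
  have nonneg: "d i \<ge> 0" if iS: "i \<in> S" for i
  proof (cases "\<sigma> i = i")
    case True
    then show ?thesis using iS SLS_nonneg[OF sls KS[OF iS] KS[OF iS]] by (simp add: d_def u_def Cm_def)
  next
    case False
    define a where "a = \<sigma> i"
    have aS: "a \<in> S" using inS iS a_def by auto
    have ai: "a \<noteq> i" using False a_def by simp
    have di: "d i = (\<alpha> i i - \<alpha> a i) - v a + v i" using iS ai by (simp add: d_def u_def Cm_def a_def)
    have G: "v a - v i \<le> \<alpha> i i - \<alpha> a i"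
      if xS: "x \<in> S" and gi: "r x \<noteq> i" and ga: "r x \<noteq> a"
        and h1: "v a \<le> v x + W x a" and h2: "v x + W x i \<le> v i" for x
    proof -
      define g where "g = r x"
      have gS: "g \<in> S" using inS xS g_def by auto
      have "W x a - W x i = \<alpha> i g - \<alpha> a g" using gi ga by (simp add: W_def Cm_def g_def)
      moreover have "\<alpha> i g + \<alpha> a i - \<alpha> a g \<le> \<alpha> i i"
        using SLS_tri[OF sls KS[OF iS] KS[OF aS] KS[OF gS]] ai gi g_def by auto
      ultimately show ?thesis using h1 h2 by linarith
    qed
    have "v a - v i \<le> \<alpha> i i - \<alpha> a i"
    proof (cases "r i = a")
      case False
      have "r i \<noteq> i" using ai a_def sr by metis
      then show ?thesis using G[OF iS _ False] v2 iS aS Wzz by auto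
    next
      case True
      have sa: "\<sigma> a = i" using True sr by metis
      have col: "\<alpha> a i \<le> \<alpha> i i" using SLS_col[OF sls KS[OF iS] KS[OF aS]] ai by auto
      have ii0: "\<alpha> i i \<ge> 0" using SLS_nonneg[OF sls KS[OF iS] KS[OF iS]] .
      from v3 iS consider "v i = 0" | x where "x \<in> S" "x \<noteq> i" "v x + W x i \<le> v i" by blast
      then show ?thesis
      proof cases
        case 1 then show ?thesis using v1 aS col by fastforce
      next
        case (2 x)
        show ?thesis
        proof (cases "x = a")
          case True
          have "W a i = \<alpha> a i" using ai by (simp add: W_def Cm_def rs[of i, folded a_def])
          moreover have "v a + W a i \<le> v i" using 2(3) True by simp
          ultimately show ?thesis using ii0 by linarith
        next
          case xa: False
          have "r x \<noteq> i" using xa sr a_def by metis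
          moreover have "r x \<noteq> a" using 2(2) sa sr by metis
          ultimately show ?thesis using G[OF 2(1)] v2 2 aS by auto
        qed
      qed
    qed
    then show ?thesis using di by linarith
  qed
  have feas: "d \<in> D_PTIN K \<alpha> S"
    unfolding D_PTIN_def
  proof (intro CollectI conjI allI ballI impI)
    fix k assume "k \<notin> S" then show "d k = 0" by (simp add: d_def)
  next
    fix k assume "k \<in> S" then show "0 \<le> d k" by (rule nonneg)
  next
    fix \<pi> assume p: "is_cycle K \<pi> \<and> set \<pi> \<subseteq> S"
    let ?c = "cycle_of_list \<pi>"
    have dist: "distinct \<pi>" "\<pi> \<noteq> []" using p by (auto simp: is_cycle_def)
    have cS: "?c k \<in> set \<pi>" if "k \<in> set \<pi>" for k
      using cycle_permutes[of \<pi>] that by (simp add: permutes_in_image)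
    have "(\<Sum>k\<in>set \<pi>. d k) = (\<Sum>k\<in>set \<pi>. u k) + (\<Sum>k\<in>set \<pi>. v k)"
    proof -
      have "(\<Sum>k\<in>set \<pi>. d k) = (\<Sum>k\<in>set \<pi>. u k + v k)"
        using p by (intro sum.cong) (auto simp: d_def)
      then show ?thesis by (simp add: sum.distrib)
    qed
    also have "(\<Sum>k\<in>set \<pi>. v k) = (\<Sum>k\<in>set \<pi>. v (?c k))"
      using sum.permute[OF cycle_permutes[of \<pi>], of v] by (simp add: comp_def)
    also have "(\<Sum>k\<in>set \<pi>. u k) + (\<Sum>k\<in>set \<pi>. v (?c k)) = (\<Sum>k\<in>set \<pi>. u k + v (?c k))"
      by (simp add: sum.distrib)
    also have "\<dots> \<le> (\<Sum>k\<in>set \<pi>. Cm \<alpha> k (?c k))"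
      using p cS by (intro sum_mono pot) auto
    also have "\<dots> = cw (Cm \<alpha>) \<pi>" using L_succ[OF dist(1)] .
    also have "\<dots> = Delta \<alpha> \<pi>" using Delta_cw[OF dist] by simp
    finally show "(\<Sum>k\<in>set \<pi>. d k) \<le> Delta \<alpha> \<pi>" .
  qed
  have val: "(\<Sum>k\<in>S. d k) = (\<Sum>x\<in>S. Cm \<alpha> x (\<sigma> x))"
  proof -
    have "(\<Sum>k\<in>S. d k) = (\<Sum>k\<in>S. Cm \<alpha> k (\<sigma> k)) - (\<Sum>k\<in>S. v (\<sigma> k)) + (\<Sum>k\<in>S. v k)"
      by (simp add: d_def u_def sum.distrib sum_subtractf)
    moreover have "(\<Sum>k\<in>S. v (\<sigma> k)) = (\<Sum>k\<in>S. v k)"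
      using sum.permute[OF sig, of v] by (simp add: comp_def)
    ultimately show ?thesis by simp
  qed
  show ?thesis using feas val by blast
qed



theorem lemma5:
  fixes K :: nat and \<alpha> :: "nat \<Rightarrow> nat \<Rightarrow> real" and S :: "nat set"
  assumes "SLS K \<alpha>" and "S \<subseteq> {1..K}"
  shows "\<exists>ps. p_optimal K \<alpha> S ps \<and> length (filter (\<lambda>\<pi>. length \<pi> = 1) ps) \<le> 1"
proof -
  note sls = assms(1) and SK = assms(2)
  have fin: "finite S" using SK finite_subset by blast
  have KS: "x \<in> {1..K}" if "x \<in> S" for x using that SK by auto
  define cost where "cost \<sigma> = (\<Sum>x\<in>S. Cm \<alpha> x (\<sigma> x))" for \<sigma> :: "nat \<Rightarrow> nat"
  define fp where "fp \<sigma> = card {x\<in>S. \<sigma> x = x}" for \<sigma> :: "nat \<Rightarrow> nat"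
  define Perms where "Perms = {\<sigma>. \<sigma> permutes S}"
  have finP: "finite Perms" unfolding Perms_def using finite_permutations[OF fin] .
  have idP: "id \<in> Perms" unfolding Perms_def by (simp add: permutes_id)
  define m where "m = Min (cost ` Perms)"
  have mle: "m \<le> cost \<tau>" if "\<tau> \<in> Perms" for \<tau> unfolding m_def using finP that by simp
  have "m \<in> cost ` Perms" unfolding m_def using finP idP by (intro Min_in) auto
  then obtain \<sigma>0 where s0: "\<sigma>0 \<in> Perms" "cost \<sigma>0 = m" by auto
  obtain \<sigma> where s: "\<sigma> \<in> Perms \<and> cost \<sigma> = m" and smin: "\<forall>\<tau>. \<tau> \<in> Perms \<and> cost \<tau> = m \<longrightarrow> fp \<sigma> \<le> fp \<tau>"
    using ex_has_least_nat[of "\<lambda>\<tau>. \<tau> \<in> Perms \<and> cost \<tau> = m" \<sigma>0 fp] s0 by blast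
  have sig: "\<sigma> permutes S" using s by (simp add: Perms_def)
  have opt: "cost \<sigma> \<le> cost \<tau>" if "\<tau> permutes S" for \<tau> using mle[of \<tau>] that s by (simp add: Perms_def)
  have fp1: "fp \<sigma> \<le> 1"
  proof (rule ccontr)
    assume "\<not> fp \<sigma> \<le> 1"
    then have c2: "card {x\<in>S. \<sigma> x = x} \<ge> 2" by (simp add: fp_def)
    define F where "F = {x\<in>S. \<sigma> x = x}"
    have finF: "finite F" using fin by (simp add: F_def)
    have cF: "card F \<ge> 2" using c2 F_def by simp
    then have "F \<noteq> {}" by auto
    then obtain i where iF: "i \<in> F" by blast
    have "card (F - {i}) \<ge> 1" using cF iF finF by simp
    then have "F - {i} \<noteq> {}" by (metis card.empty not_one_le_zero)
    then obtain j where jF: "j \<in> F" "j \<noteq> i" by blast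
    have iS: "i \<in> S" "\<sigma> i = i" and jS: "j \<in> S" "\<sigma> j = j" using iF jF by (auto simp: F_def)
    define \<tau> where "\<tau> = Transposition.transpose i j \<circ> \<sigma>"
    have tp: "\<tau> permutes S" unfolding \<tau>_def using permutes_compose[OF sig permutes_swap_id[OF iS(1) jS(1)]] .
    have oth: "\<tau> x = \<sigma> x" "\<sigma> x \<noteq> i" "\<sigma> x \<noteq> j" if "x \<in> S - {i, j}" for x
    proof -
      have inj: "inj \<sigma>" using sig permutes_inj by blast
      show "\<sigma> x \<noteq> i" using that iS inj by (metis DiffD2 insertI1 inj_eq)
      show "\<sigma> x \<noteq> j" using that jS inj by (metis DiffD2 insertI1 insert_commute inj_eq)
      then show "\<tau> x = \<sigma> x" using \<open>\<sigma> x \<noteq> i\<close> by (simp add: \<tau>_def transpose_def)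
    qed
    have ti: "\<tau> i = j" and tj: "\<tau> j = i" using iS jS by (auto simp: \<tau>_def)
    have ct: "cost \<tau> = Cm \<alpha> i j + Cm \<alpha> j i + (\<Sum>x\<in>S - {i, j}. Cm \<alpha> x (\<sigma> x))"
      unfolding cost_def using sum_two[OF fin iS(1) jS(1) jF(2)[symmetric], of "\<lambda>x. Cm \<alpha> x (\<tau> x)"] ti tj oth(1)
      by simp
    have cs: "cost \<sigma> = Cm \<alpha> i i + Cm \<alpha> j j + (\<Sum>x\<in>S - {i, j}. Cm \<alpha> x (\<sigma> x))"
      unfolding cost_def using sum_two[OF fin iS(1) jS(1) jF(2)[symmetric], of "\<lambda>x. Cm \<alpha> x (\<sigma> x)"] iS jS
      by simp
    have "\<alpha> i j \<ge> 0" "\<alpha> j i \<ge> 0" using SLS_nonneg[OF sls] KS iS jS by auto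
    then have "Cm \<alpha> i j + Cm \<alpha> j i \<le> Cm \<alpha> i i + Cm \<alpha> j j" using jF(2) by (simp add: Cm_def)
    then have "cost \<tau> \<le> cost \<sigma>" using ct cs by linarith
    with opt[OF tp] s have "\<tau> \<in> Perms \<and> cost \<tau> = m" using tp by (simp add: Perms_def)
    with smin have le: "fp \<sigma> \<le> fp \<tau>" by blast
    have "{x\<in>S. \<tau> x = x} = F - {i, j}"
    proof (rule set_eqI, rule iffI)
      fix x assume "x \<in> {x\<in>S. \<tau> x = x}"
      then have x: "x \<in> S" "\<tau> x = x" by auto
      have "x \<noteq> i" using x(2) ti jF(2) by metis
      moreover have "x \<noteq> j" using x(2) tj jF(2) by metis
      ultimately have "x \<in> S - {i, j}" using x(1) by blast
      then have "\<sigma> x = x" using oth(1) x(2) by metis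
      then show "x \<in> F - {i, j}" using \<open>x \<in> S - {i, j}\<close> unfolding F_def by blast
    next
      fix x assume x: "x \<in> F - {i, j}"
      then have "x \<in> S - {i, j}" "\<sigma> x = x" unfolding F_def by auto
      then show "x \<in> {x\<in>S. \<tau> x = x}" using oth(1) by simp
    qed
    then have "fp \<tau> = card (F - {i, j})" by (simp add: fp_def)
    also have "\<dots> = card F - 2" using iF jF finF by (simp add: card_Diff_subset)
    finally show False using le cF by (simp add: fp_def F_def[symmetric])
  qed
  obtain d where dD: "d \<in> D_PTIN K \<alpha> S" and dv: "(\<Sum>k\<in>S. d k) = cost \<sigma>"
    using main_opt[OF sls SK sig] opt unfolding cost_def by blast
  obtain ps where ps: "\<forall>\<pi>\<in>set ps. \<pi> \<noteq> [] \<and> distinct \<pi>" "distinct (concat ps)" "set (concat ps) = S"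
     "(\<Sum>\<pi>\<leftarrow>ps. cw (Cm \<alpha>) \<pi>) = (\<Sum>x\<in>S. Cm \<alpha> x (\<sigma> x))"
     "length (filter (\<lambda>\<pi>. length \<pi> = 1) ps) = card {x\<in>S. \<sigma> x = x}"
    using conv[OF cycle_decomposition[OF sig fin], of "Cm \<alpha>"] by blast
  have cp: "cyclic_partition K S ps"
    unfolding cyclic_partition_def is_cycle_def using ps(1-3) SK by auto
  have "(\<Sum>\<pi>\<leftarrow>ps. Delta \<alpha> \<pi>) = (\<Sum>\<pi>\<leftarrow>ps. cw (Cm \<alpha>) \<pi>)"
    using ps(1) by (intro arg_cong[where f=sum_list] map_cong) (auto intro: Delta_cw)
  then have sumps: "(\<Sum>\<pi>\<leftarrow>ps. Delta \<alpha> \<pi>) = cost \<sigma>" using ps(4) by (simp add: cost_def)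
  have "D_Sigma_PTIN K \<alpha> S = cost \<sigma>"
    unfolding D_Sigma_PTIN_def
  proof (rule cSup_eq_maximum)
    show "cost \<sigma> \<in> (\<lambda>d. \<Sum>k\<in>S. d k) ` D_PTIN K \<alpha> S" using dD dv by force
  next
    fix x assume "x \<in> (\<lambda>d. \<Sum>k\<in>S. d k) ` D_PTIN K \<alpha> S"
    then obtain d' where "d' \<in> D_PTIN K \<alpha> S" "x = (\<Sum>k\<in>S. d' k)" by blast
    then show "x \<le> cost \<sigma>" using weak[OF _ cp, of d' \<alpha>] sumps by simp
  qed
  then have "p_optimal K \<alpha> S ps" using cp sumps by (simp add: p_optimal_def)
  moreover have "length (filter (\<lambda>\<pi>. length \<pi> = 1) ps) \<le> 1" using ps(5) fp1 by (simp add: fp_def)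
  ultimately show ?thesis by blast
qed


end
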